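(* Let $(B,\lfloor\cdot,\cdot\rfloor)$ be an SSD space with quadratic form $q$, and let $f:B\to\mathbb{R}\cup\{+\infty\}$ be a minimal element (with respect to the pointwise order) of the set of convex functions $g:B\to\mathbb{R}\cup\{+\infty\}$ satisfying $g\ge q$ on $B$. Then $f^{@}\ge f$ on $B$.
   Context: An SSD space is a pair $(B,\lfloor\cdot,\cdot\rfloor)$ with $B$ a nonzero real vector space and $\lfloor\cdot,\cdot\rfloor$ a symmetric bilinear form; $q(b)=\frac12\lfloor b,b\rfloor$. For $f:B\to\mathbb{R}\cup\{+\infty\}$, $f^{@}(b)=\sup_{c\in B}\{\lfloor c,b\rfloor-f(c)\}$. *)

theory Defs
  imports "HOL-Analysis.Analysis" "HOL-Library.Extended_Real"
begin

definition SSD_space :: "('b::real_vector \<Rightarrow> 'b \<Rightarrow> real) \<Rightarrow> bool" where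
  "SSD_space bf \<longleftrightarrow> (\<exists>x::'b. x \<noteq> 0) \<and> bilinear bf \<and> (\<forall>x y. bf x y = bf y x)"

definition ssd_q :: "('b::real_vector \<Rightarrow> 'b \<Rightarrow> real) \<Rightarrow> 'b \<Rightarrow> real" where
  "ssd_q bf b = bf b b / 2"

definition ext_convex :: "('b::real_vector \<Rightarrow> ereal) \<Rightarrow> bool" where
  "ext_convex g \<longleftrightarrow> (\<forall>x. g x \<noteq> -\<infinity>) \<and>
     (\<forall>x y t. 0 < t \<and> t < 1 \<longrightarrow>
        g ((1 - t) *\<^sub>R x + t *\<^sub>R y) \<le> ereal (1 - t) * g x + ereal t * g y)"

definition ssd_conj :: "('b::real_vector \<Rightarrow> 'b \<Rightarrow> real) \<Rightarrow> ('b \<Rightarrow> ereal) \<Rightarrow> 'b \<Rightarrow> ereal" where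
  "ssd_conj bf f b = (SUP c. ereal (bf c b) - f c)"

definition convex_majorants_q :: "('b::real_vector \<Rightarrow> 'b \<Rightarrow> real) \<Rightarrow> ('b \<Rightarrow> ereal) set" where
  "convex_majorants_q bf = {g. ext_convex g \<and> (\<forall>b. ereal (ssd_q bf b) \<le> g b)}"

end

theory Submission
  imports Defs
begin

lemma key_ineq:
  fixes u A D M r y0 :: real
  assumes "0 \<le> u" "u \<le> 1" "A/2 \<le> r" "D/2 \<le> y0" "M \<le> y0 + r"
  shows "((1-u)^2 * A + 2*u*(1-u) * M + u^2 * D)/2 \<le> (1-u) * r + u * y0"
proof -
  have a: "(1-u)^2 * (A/2) \<le> (1-u)^2 * r" using assms by (intro mult_left_mono) auto
  have b: "(u*(1-u)) * M \<le> (u*(1-u)) * (y0 + r)" using assms by (intro mult_left_mono) auto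
  have c: "u^2 * (D/2) \<le> u^2 * y0" using assms by (intro mult_left_mono) auto
  have "((1-u)^2 * A + 2*u*(1-u) * M + u^2 * D)/2 \<le> (1-u)^2 * r + (u*(1-u)) * (y0 + r) + u^2 * y0"
    using a b c by (simp add: field_simps)
  also have "\<dots> = (1-u) * r + u * y0" by (simp add: power2_eq_square algebra_simps)
  finally show ?thesis .
qed

lemma bf_expand:
  assumes "bilinear bf" "\<forall>x y. bf x y = bf y x"
  shows "bf ((1-u) *\<^sub>R b + u *\<^sub>R d) ((1-u) *\<^sub>R b + u *\<^sub>R d)
     = (1-u)^2 * bf b b + 2*u*(1-u) * bf d b + u^2 * bf d d"
proof -
  have s: "bf b d = bf d b" using assms(2) by blast
  show ?thesis
    by (simp only: bilinear_ladd[OF assms(1)] bilinear_radd[OF assms(1)]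
      bilinear_lmul[OF assms(1)] bilinear_rmul[OF assms(1)] s real_scaleR_def)
       (simp add: power2_eq_square algebra_simps)
qed

lemma epi_convex:
  fixes f :: "'b::real_vector \<Rightarrow> ereal"
  assumes "ext_convex f"
  shows "convex {(d, y::real). f d \<le> ereal y}"
proof (rule convexI)
  fix x y :: "'b \<times> real" and u v :: real
  assume x: "x \<in> {(d, y). f d \<le> ereal y}" and y: "y \<in> {(d, y). f d \<le> ereal y}"
    and u: "0 \<le> u" and v: "0 \<le> v" and uv: "u + v = 1"
  obtain d1 y1 where x': "x = (d1, y1)" "f d1 \<le> ereal y1" using x by auto
  obtain d2 y2 where y': "y = (d2, y2)" "f d2 \<le> ereal y2" using y by auto
  show "u *\<^sub>R x + v *\<^sub>R y \<in> {(d, y). f d \<le> ereal y}"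
  proof (cases "v = 0 \<or> v = 1")
    case True
    then show ?thesis using x' y' uv by auto
  next
    case False
    then have v01: "0 < v" "v < 1" using v uv u by auto
    have "f ((1 - v) *\<^sub>R d1 + v *\<^sub>R d2) \<le> ereal (1 - v) * f d1 + ereal v * f d2"
      using assms v01 unfolding ext_convex_def by blast
    also have "\<dots> \<le> ereal (1 - v) * ereal y1 + ereal v * ereal y2"
      using v01 x' y' by (intro add_mono ereal_mult_left_mono) auto
    finally have "f ((1 - v) *\<^sub>R d1 + v *\<^sub>R d2) \<le> ereal ((1 - v) * y1 + v * y2)" by simp
    moreover have "u = 1 - v" using uv by simp
    ultimately show ?thesis using x' y' by simp
  qed
qed

theorem mainTheorem13:
  fixes bf :: "'b::real_vector \<Rightarrow> 'b \<Rightarrow> real" and f :: "'b \<Rightarrow> ereal"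
  assumes "SSD_space bf"
    and "f \<in> convex_majorants_q bf"
    and "\<forall>g \<in> convex_majorants_q bf. g \<le> f \<longrightarrow> g = f"
  shows "\<forall>b. f b \<le> ssd_conj bf f b"
proof
  fix b
  have bil: "bilinear bf" and sym: "\<forall>x y. bf x y = bf y x" using assms(1) unfolding SSD_space_def by auto
  have fconv: "ext_convex f" and fq: "\<And>c. ereal (ssd_q bf c) \<le> f c"
    using assms(2) unfolding convex_majorants_q_def by auto
  have fninf: "\<And>c. f c \<noteq> -\<infinity>" using fconv unfolding ext_convex_def by auto
  show "f b \<le> ssd_conj bf f b"
  proof (rule ccontr)
    assume "\<not> f b \<le> ssd_conj bf f b"
    hence lt: "ssd_conj bf f b < f b" by simp
    have conj_ge: "\<And>c. ereal (bf c b) - f c \<le> ssd_conj bf f b"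
      unfolding ssd_conj_def by (rule SUP_upper) auto
    have qb: "ereal (ssd_q bf b) < f b"
    proof (rule ccontr)
      assume "\<not> ereal (ssd_q bf b) < f b"
      hence eq: "f b = ereal (ssd_q bf b)" using fq[of b] by simp
      have "ereal (bf b b) - f b = ereal (ssd_q bf b)" unfolding eq ssd_q_def by simp
      hence "f b \<le> ssd_conj bf f b" using conj_ge[of b] eq by simp
      thus False using lt by simp
    qed
    have "max (ereal (ssd_q bf b)) (ssd_conj bf f b) < f b" using qb lt by simp
    then obtain r where r1: "max (ereal (ssd_q bf b)) (ssd_conj bf f b) < ereal r"
      and r2: "ereal r < f b" using ereal_dense2 by blast
    have rq: "ssd_q bf b \<le> r" and rc: "ssd_conj bf f b < ereal r" using r1 by auto
    define E where "E = {(d, y::real). f d \<le> ereal y}"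
    define S where "S = convex hull (insert (b, r) E)"
    define g where "g = (\<lambda>c. INF y\<in>{y. (c, y) \<in> S}. ereal y)"
    have Econv: "convex E" unfolding E_def using epi_convex[OF fconv] .
    have ES: "E \<subseteq> S" unfolding S_def using hull_subset[of "insert (b,r) E" convex] by blast
    have bS: "(b, r) \<in> S" unfolding S_def by (simp add: hull_inc)
    have Sconv: "convex S" unfolding S_def by simp
    have Sq: "ssd_q bf c \<le> y" if cy: "(c, y) \<in> S" for c y
    proof (cases "E = {}")
      case True
      then have "S = {(b, r)}" unfolding S_def by simp
      then show ?thesis using cy rq by simp
    next
      case False
      have hE: "convex hull E = E" using Econv by (rule convex_hull_eq[THEN iffD2])
      have "(c, y) \<in> {(1 - u) *\<^sub>R (b, r) + u *\<^sub>R x |x u. 0 \<le> u \<and> u \<le> 1 \<and> x \<in> E}"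
        using cy False unfolding S_def convex_hull_insert_alt hE by simp
      then obtain x u where xu: "(c, y) = (1 - u) *\<^sub>R (b, r) + u *\<^sub>R x"
          "0 \<le> u" "u \<le> 1" "x \<in> E"
        by blast
      obtain d y0 where x: "x = (d, y0)" "f d \<le> ereal y0" using xu(4) unfolding E_def by auto
      have c: "c = (1 - u) *\<^sub>R b + u *\<^sub>R d" and y: "y = (1 - u) * r + u * y0"
        using xu(1) x(1) by auto
      have D: "bf d d / 2 \<le> y0" using fq[of d] x(2) unfolding ssd_q_def by (meson ereal_less_eq(3) order_trans)
      have A: "bf b b / 2 \<le> r" using rq unfolding ssd_q_def .
      have "ereal (bf d b) - ereal y0 \<le> ereal (bf d b) - f d"
        using x(2) by (intro ereal_minus_mono) auto
      also have "\<dots> \<le> ssd_conj bf f b" by (rule conj_ge)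
      also have "\<dots> < ereal r" by (rule rc)
      finally have M: "bf d b \<le> y0 + r" by simp
      have "ssd_q bf c = ((1-u)^2 * bf b b + 2*u*(1-u) * bf d b + u^2 * bf d d)/2"
        unfolding ssd_q_def c bf_expand[OF bil sym] ..
      also have "\<dots> \<le> (1-u) * r + u * y0" by (rule key_ineq[OF xu(2,3) A D M])
      finally show ?thesis using y by simp
    qed
    have gq: "ereal (ssd_q bf c) \<le> g c" for c
      unfolding g_def by (rule INF_greatest) (use Sq in auto)
    have gle: "g c \<le> f c" for c
    proof (cases "f c = \<infinity>")
      case True then show ?thesis by simp
    next
      case False
      then obtain y where y: "f c = ereal y" using fninf[of c] by (cases "f c") auto
      then have "(c, y) \<in> S" using ES unfolding E_def by auto
      then have "g c \<le> ereal y" unfolding g_def by (intro INF_lower) auto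
      then show ?thesis using y by simp
    qed
    have gb: "g b \<le> ereal r" unfolding g_def using bS by (intro INF_lower) auto
    have gninf: "g c \<noteq> -\<infinity>" for c using gq[of c] by auto
    have gconv: "ext_convex g"
      unfolding ext_convex_def
    proof (intro conjI allI impI)
      fix x show "g x \<noteq> -\<infinity>" by (rule gninf)
    next
      fix x y :: 'b and t :: real
      assume t: "0 < t \<and> t < 1"
      show "g ((1 - t) *\<^sub>R x + t *\<^sub>R y) \<le> ereal (1 - t) * g x + ereal t * g y"
      proof (cases "g x = \<infinity> \<or> g y = \<infinity>")
        case True
        have t1: "0 < 1 - t" "0 < t" using t by auto
        show ?thesis
        proof (cases "g x = \<infinity>")
          case True
          have "ereal (1-t) * g x = \<infinity>" using True t1 by simp
          moreover have "ereal t * g y \<noteq> -\<infinity>" using t1 gninf[of y] by (cases "g y") auto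
          ultimately have "ereal (1-t) * g x + ereal t * g y = \<infinity>"
            by (metis ereal_plus_eq_PInfty)
          then show ?thesis by (metis ereal_less_eq(1))
        next
          case False
          then have "g y = \<infinity>" using \<open>g x = \<infinity> \<or> g y = \<infinity>\<close> by simp
          then have "ereal t * g y = \<infinity>" using t1 by simp
          moreover have "ereal (1-t) * g x \<noteq> -\<infinity>" using t1 gninf[of x] by (cases "g x") auto
          ultimately have "ereal (1-t) * g x + ereal t * g y = \<infinity>"
            by (metis ereal_plus_eq_PInfty)
          then show ?thesis by (metis ereal_less_eq(1))
        qed
      next
        case False
        obtain a where a: "g x = ereal a" using False gninf[of x] by (cases "g x") auto
        obtain c where c: "g y = ereal c" using False gninf[of y] by (cases "g y") auto
        show ?thesis
        proof (rule ereal_le_epsilon2)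
          fix e :: real assume e: "0 < e"
          have "g x < ereal (a + e)" using a e by simp
          then obtain a' where a': "(x, a') \<in> S" "ereal a' < ereal (a + e)"
            unfolding g_def INF_less_iff by blast
          have "g y < ereal (c + e)" using c e by simp
          then obtain c' where c': "(y, c') \<in> S" "ereal c' < ereal (c + e)"
            unfolding g_def INF_less_iff by blast
          have "(1 - t) *\<^sub>R (x, a') + t *\<^sub>R (y, c') \<in> S"
            using Sconv a'(1) c'(1) t by (intro convexD) auto
          then have "((1 - t) *\<^sub>R x + t *\<^sub>R y, (1 - t) * a' + t * c') \<in> S" by simp
          then have "g ((1 - t) *\<^sub>R x + t *\<^sub>R y) \<le> ereal ((1 - t) * a' + t * c')"
            unfolding g_def by (intro INF_lower) auto
          also have "\<dots> \<le> ereal ((1 - t) * (a + e) + t * (c + e))"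
            using a'(2) c'(2) t by (simp add: add_mono mult_left_mono)
          also have "\<dots> = ereal (1 - t) * g x + ereal t * g y + ereal e"
            using a c by (simp add: algebra_simps)
          finally show "g ((1 - t) *\<^sub>R x + t *\<^sub>R y) \<le> ereal (1 - t) * g x + ereal t * g y + ereal e" .
        qed
      qed
    qed
    have "g \<in> convex_majorants_q bf" unfolding convex_majorants_q_def using gconv gq by auto
    moreover have "g \<le> f" using gle by (simp add: le_fun_def)
    ultimately have "g = f" using assms(3) by blast
    then show False using gb r2 by simp
  qed
qed

end
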